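(* Assume (H4) and (H5) of the standing setting. Let $T>0$, $u^0\in D(\varphi)$, $f\in L^2(0,T;H)$, $\Delta t>0$ and $N\in\mathbb N$ with $N\Delta t\le T$, and suppose $\{u^n\}_{n=1}^N\subset W\cap D(\varphi)$ solve the semi-implicit scheme (S). Then there is a constant $M>0$ depending only on $\theta_2$, $C_{\mathrm{reg}}$, $C_{\varphi2}$ (and the constants in (H4)), and independent of $n,N,\Delta t,u^0,f$, such that for all $n=1,\dots,N$, $$\Big\|\frac{u^n-u^{n-1}}{\Delta t}\Big\|_H^2+\frac{\|u^n\|_V^2-\|u^{n-1}\|_V^2+\|u^n-u^{n-1}\|_V^2}{\Delta t}+\frac{2(\varphi(u^n)-\varphi(u^{n-1}))}{\Delta t}\le M\big(\|u^{n-1}\|_V^{2\theta_2}\|u^n\|_V^2+\|f^n\|_H^2+1\big).$$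
   Context: Standing setting. $V\subset H\subset V'$ is a Gelfand triple of real Hilbert spaces ($H$ identified with its dual), with continuous and dense embeddings, and the embedding $V\hookrightarrow H$ is compact. $(\cdot,\cdot)$ denotes the inner product of $H$ and $\langle\cdot,\cdot\rangle$ the duality pairing between $V'$ and $V$ (extending $(\cdot,\cdot)$). $a:V\times V\to\mathbb R$ is a bounded bilinear form with $a(u,u)\ge\alpha\|u\|^2$ for some $\alpha>0$; the norm of $V$ is taken to be $\|u\|_V:=\sqrt{a(u,u)}$. $B:V\times V\to V'$ is a bilinear operator with $|\langle B(u,v),w\rangle|\le C_B\|u\|_V\|v\|_V\|w\|_V$. $\varphi:V\to(-\infty,+\infty]$ is convex, proper and lower semicontinuous, $D(\varphi)=\{v:\varphi(v)<\infty\}$, $\partial\varphi(u)=\{\xi\in V':\langle\xi,v-u\rangle\le\varphi(v)-\varphi(u)\ \forall v\in V\}$, $D(\partial\varphi)=\{u:\partial\varphi(u)\neq\emptyset\}$. $W\subset V$ is a Hilbert space whose embedding into $V$ is dense and compact. An element $g\in V'$ belongs to $H$ if there is $h\in H$ with $\langle g,v\rangle=(h,v)$ for all $v\in V$; then $\|g\|_H:=\|h\|_H$. (H4) There are $C>0$, $\gamma\in(0,1]$ such that for $u\in V$, $v\in W$, $B(u,v)$ belongs to $H$ and $\|B(u,v)\|_H\le C\|u\|_V\|v\|_V^\gamma\|v\|_W^{1-\gamma}$. Set $\theta_2:=1/\gamma\ge1$. (H5) There are constants $C_{\mathrm{reg}},C_{\varphi2}>0$ such that whenever $u\in D(\varphi)$,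 $f\in H$ satisfy $a(u,v-u)+\varphi(v)-\varphi(u)\ge\langle f,v-u\rangle$ for all $v\in V$, then $u\in W\cap D(\partial\varphi)$ and $\|u\|_W\le C_{\mathrm{reg}}\|f\|_H+C_{\varphi2}$. Scheme (S): with $f^n:=\frac1{\Delta t}\int_{(n-1)\Delta t}^{n\Delta t}f(t)\,dt$, for $n=1,\dots,N$, $$\Big(\frac{u^n-u^{n-1}}{\Delta t},v-u^n\Big)+a(u^n,v-u^n)+\langle B(u^{n-1},u^n),v-u^n\rangle+\varphi(v)-\varphi(u^n)\ge(f^n,v-u^n)\quad\forall v\in V.$$
   Formalization: The bilinear form a is also symmetric, a(u,v) = a(v,u) for all u, v in V. The statement above fails without it. *)

theory Defs
  imports "HOL-Analysis.Analysis"
begin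

(* H is the type 'h (a real Hilbert space); V and W are subsets of 'h carrying
   their own inner products a (on V) and wi (on W).
   Elements of V' are represented as real functions g on 'h, of which only the
   values on V matter; the duality pairing <g,v> is g v. *)

definition Vnorm :: "('h \<Rightarrow> 'h \<Rightarrow> real) \<Rightarrow> 'h \<Rightarrow> real" where
  "Vnorm a u = sqrt (a u u)"

definition lin_subspace :: "'h::real_vector set \<Rightarrow> bool" where
  "lin_subspace S \<longleftrightarrow> 0 \<in> S \<and> (\<forall>x\<in>S. \<forall>y\<in>S. x + y \<in> S) \<and> (\<forall>c. \<forall>x\<in>S. c *\<^sub>R x \<in> S)"

definition hilbert_form :: "'h::real_vector set \<Rightarrow> ('h \<Rightarrow> 'h \<Rightarrow> real) \<Rightarrow> bool" where
  "hilbert_form S b \<longleftrightarrow> lin_subspace S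
     \<and> (\<forall>x\<in>S. \<forall>y\<in>S. \<forall>z\<in>S. b (x + y) z = b x z + b y z)
     \<and> (\<forall>c. \<forall>x\<in>S. \<forall>z\<in>S. b (c *\<^sub>R x) z = c * b x z)
     \<and> (\<forall>x\<in>S. \<forall>y\<in>S. b x y = b y x)
     \<and> (\<forall>x\<in>S. x \<noteq> 0 \<longrightarrow> b x x > 0)
     \<and> (\<forall>X :: nat \<Rightarrow> 'h. (\<forall>k. X k \<in> S) \<and> (\<forall>e>0. \<exists>K. \<forall>m\<ge>K. \<forall>n\<ge>K. Vnorm b (X m - X n) < e)
            \<longrightarrow> (\<exists>l\<in>S. (\<lambda>k. Vnorm b (X k - l)) \<longlonglongrightarrow> 0))"

definition gelfand_setting :: "'h::real_inner set \<Rightarrow> ('h \<Rightarrow> 'h \<Rightarrow> real) \<Rightarrow> bool" where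
  "gelfand_setting V a \<longleftrightarrow> hilbert_form V a
     \<and> (\<exists>c::real>0. \<forall>u\<in>V. norm u \<le> c * Vnorm a u)
     \<and> closure V = UNIV
     \<and> (\<forall>(X :: nat \<Rightarrow> 'h) (K :: real). (\<forall>k. X k \<in> V) \<and> (\<forall>k. Vnorm a (X k) \<le> K)
            \<longrightarrow> (\<exists>(r :: nat \<Rightarrow> nat) (l :: 'h). strict_mono r \<and> (X \<circ> r) \<longlonglongrightarrow> l))"

definition dual_elem :: "'h::real_vector set \<Rightarrow> ('h \<Rightarrow> 'h \<Rightarrow> real) \<Rightarrow> ('h \<Rightarrow> real) \<Rightarrow> bool" where
  "dual_elem V a g \<longleftrightarrow> (\<forall>x\<in>V. \<forall>y\<in>V. g (x + y) = g x + g y)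
     \<and> (\<forall>c. \<forall>x\<in>V. g (c *\<^sub>R x) = c * g x)
     \<and> (\<exists>K. \<forall>x\<in>V. \<bar>g x\<bar> \<le> K * Vnorm a x)"

definition B_ok :: "'h::real_vector set \<Rightarrow> ('h \<Rightarrow> 'h \<Rightarrow> real) \<Rightarrow> ('h \<Rightarrow> 'h \<Rightarrow> 'h \<Rightarrow> real) \<Rightarrow> real \<Rightarrow> bool" where
  "B_ok V a B CB \<longleftrightarrow>
     (\<forall>u\<in>V. \<forall>v\<in>V. dual_elem V a (B u v))
     \<and> (\<forall>u1\<in>V. \<forall>u2\<in>V. \<forall>v\<in>V. \<forall>w\<in>V. B (u1 + u2) v w = B u1 v w + B u2 v w)
     \<and> (\<forall>c. \<forall>u\<in>V. \<forall>v\<in>V. \<forall>w\<in>V. B (c *\<^sub>R u) v w = c * B u v w)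
     \<and> (\<forall>u\<in>V. \<forall>v1\<in>V. \<forall>v2\<in>V. \<forall>w\<in>V. B u (v1 + v2) w = B u v1 w + B u v2 w)
     \<and> (\<forall>c. \<forall>u\<in>V. \<forall>v\<in>V. \<forall>w\<in>V. B u (c *\<^sub>R v) w = c * B u v w)
     \<and> (\<forall>u\<in>V. \<forall>v\<in>V. \<forall>w\<in>V. \<bar>B u v w\<bar> \<le> CB * Vnorm a u * Vnorm a v * Vnorm a w)"

definition phi_ok :: "'h::real_vector set \<Rightarrow> ('h \<Rightarrow> 'h \<Rightarrow> real) \<Rightarrow> ('h \<Rightarrow> ereal) \<Rightarrow> bool" where
  "phi_ok V a phi \<longleftrightarrow> (\<forall>v\<in>V. phi v \<noteq> -\<infinity>)
     \<and> (\<exists>v\<in>V. phi v < \<infinity>)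
     \<and> (\<forall>x\<in>V. \<forall>y\<in>V. \<forall>t::real. 0 \<le> t \<and> t \<le> 1 \<longrightarrow>
          phi ((1 - t) *\<^sub>R x + t *\<^sub>R y) \<le> ereal (1 - t) * phi x + ereal t * phi y)
     \<and> (\<forall>x (X :: nat \<Rightarrow> 'h). x \<in> V \<and> (\<forall>k. X k \<in> V) \<and> (\<lambda>k. Vnorm a (X k - x)) \<longlonglongrightarrow> 0
            \<longrightarrow> phi x \<le> liminf (\<lambda>k. phi (X k)))"

definition Dphi :: "'h set \<Rightarrow> ('h \<Rightarrow> ereal) \<Rightarrow> 'h set" where
  "Dphi V phi = {v \<in> V. phi v < \<infinity>}"

definition subdiff :: "'h::real_vector set \<Rightarrow> ('h \<Rightarrow> 'h \<Rightarrow> real) \<Rightarrow> ('h \<Rightarrow> ereal) \<Rightarrow> 'h \<Rightarrow> ('h \<Rightarrow> real) set" where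
  "subdiff V a phi u = {\<xi>. u \<in> Dphi V phi \<and> dual_elem V a \<xi>
       \<and> (\<forall>v\<in>V. ereal (\<xi> (v - u)) \<le> phi v - phi u)}"

definition Dsubdiff :: "'h::real_vector set \<Rightarrow> ('h \<Rightarrow> 'h \<Rightarrow> real) \<Rightarrow> ('h \<Rightarrow> ereal) \<Rightarrow> 'h set" where
  "Dsubdiff V a phi = {u \<in> V. subdiff V a phi u \<noteq> {}}"

definition W_ok :: "'h::real_vector set \<Rightarrow> ('h \<Rightarrow> 'h \<Rightarrow> real) \<Rightarrow> 'h set \<Rightarrow> ('h \<Rightarrow> 'h \<Rightarrow> real) \<Rightarrow> bool" where
  "W_ok V a W wi \<longleftrightarrow> W \<subseteq> V \<and> hilbert_form W wi
     \<and> (\<exists>c::real>0. \<forall>u\<in>W. Vnorm a u \<le> c * Vnorm wi u)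
     \<and> (\<forall>v\<in>V. \<forall>e>0. \<exists>w\<in>W. Vnorm a (v - w) < e)
     \<and> (\<forall>(X :: nat \<Rightarrow> 'h) (K :: real). (\<forall>k. X k \<in> W) \<and> (\<forall>k. Vnorm wi (X k) \<le> K)
            \<longrightarrow> (\<exists>r. \<exists>l\<in>V. strict_mono r \<and> (\<lambda>k. Vnorm a (X (r k) - l)) \<longlonglongrightarrow> 0))"

definition in_H :: "'h::real_inner set \<Rightarrow> ('h \<Rightarrow> real) \<Rightarrow> bool" where
  "in_H V g \<longleftrightarrow> (\<exists>h. \<forall>v\<in>V. g v = h \<bullet> v)"

definition normH :: "'h::real_inner set \<Rightarrow> ('h \<Rightarrow> real) \<Rightarrow> real" where
  "normH V g = norm (SOME h. \<forall>v\<in>V. g v = h \<bullet> v)"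

definition H4 :: "'h::real_inner set \<Rightarrow> ('h \<Rightarrow> 'h \<Rightarrow> real) \<Rightarrow> ('h \<Rightarrow> 'h \<Rightarrow> 'h \<Rightarrow> real)
     \<Rightarrow> 'h set \<Rightarrow> ('h \<Rightarrow> 'h \<Rightarrow> real) \<Rightarrow> real \<Rightarrow> real \<Rightarrow> bool" where
  "H4 V a B W wi C \<gamma> \<longleftrightarrow> C > 0 \<and> 0 < \<gamma> \<and> \<gamma> \<le> 1
     \<and> (\<forall>u\<in>V. \<forall>v\<in>W. in_H V (B u v)
          \<and> normH V (B u v) \<le> C * Vnorm a u * Vnorm a v powr \<gamma> * Vnorm wi v powr (1 - \<gamma>))"

definition H5 :: "'h::real_inner set \<Rightarrow> ('h \<Rightarrow> 'h \<Rightarrow> real) \<Rightarrow> ('h \<Rightarrow> ereal)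
     \<Rightarrow> 'h set \<Rightarrow> ('h \<Rightarrow> 'h \<Rightarrow> real) \<Rightarrow> real \<Rightarrow> real \<Rightarrow> bool" where
  "H5 V a phi W wi Creg Cphi2 \<longleftrightarrow> Creg > 0 \<and> Cphi2 > 0
     \<and> (\<forall>u f. u \<in> Dphi V phi
          \<and> (\<forall>v\<in>V. ereal (a u (v - u)) + phi v - phi u \<ge> ereal (f \<bullet> (v - u)))
          \<longrightarrow> u \<in> W \<and> u \<in> Dsubdiff V a phi \<and> Vnorm wi u \<le> Creg * norm f + Cphi2)"

definition favg :: "(real \<Rightarrow> 'h::{real_inner,banach,second_countable_topology}) \<Rightarrow> real \<Rightarrow> nat \<Rightarrow> 'h" where
  "favg f dt n = (1 / dt) *\<^sub>R (LINT t:{real (n - 1) * dt .. real n * dt}|lborel. f t)"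

definition L2H :: "real \<Rightarrow> (real \<Rightarrow> 'h::{real_inner,banach,second_countable_topology}) \<Rightarrow> bool" where
  "L2H T f \<longleftrightarrow> set_borel_measurable lborel {0..T} f
     \<and> set_integrable lborel {0..T} (\<lambda>t. (norm (f t))\<^sup>2)"

definition scheme :: "'h::{real_inner,banach,second_countable_topology} set \<Rightarrow> ('h \<Rightarrow> 'h \<Rightarrow> real)
     \<Rightarrow> ('h \<Rightarrow> 'h \<Rightarrow> 'h \<Rightarrow> real) \<Rightarrow> ('h \<Rightarrow> ereal) \<Rightarrow> (real \<Rightarrow> 'h) \<Rightarrow> real \<Rightarrow> nat
     \<Rightarrow> (nat \<Rightarrow> 'h) \<Rightarrow> bool" where
  "scheme V a B phi f dt N u \<longleftrightarrow> (\<forall>n\<in>{1..N}. \<forall>v\<in>V.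
      ereal (((1 / dt) *\<^sub>R (u n - u (n - 1))) \<bullet> (v - u n) + a (u n) (v - u n)
             + B (u (n - 1)) (u n) (v - u n)) + phi v - phi (u n)
      \<ge> ereal (favg f dt n \<bullet> (v - u n)))"

end

theory Submission
  imports Defs
begin

lemma bound_b:
  fixes C g Creg x y w b :: real
  assumes C: "0 < C" and g: "0 < g" "g \<le> 1" and Cr: "0 < Creg"
    and x: "0 \<le> x" and y: "0 \<le> y" and w: "0 \<le> w"
    and b: "b \<le> C * x * y powr g * w powr (1 - g)"
  shows "b \<le> C * ((8*C*Creg) powr (1/g)) powr (1-g) * (x powr (1/g) * y) + w/(8*Creg)"
proof -
  define K where "K = (8*C*Creg) powr (1/g)"
  define P where "P = x powr (1/g) * y"
  have K0: "K > 0" using C Cr by (simp add: K_def)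
  have Kg: "K powr g = 8*C*Creg" using C Cr g by (simp add: K_def powr_powr)
  have P0: "P \<ge> 0" using y by (simp add: P_def)
  have Pg: "P powr g = x * y powr g"
    using x y g by (simp add: P_def powr_mult powr_powr)
  have bP: "b \<le> C * P powr g * w powr (1-g)" using b Pg by (simp add: mult.assoc)
  have c1P: "0 \<le> C * K powr (1-g) * P" using C P0 by simp
  show ?thesis unfolding K_def[symmetric] P_def[symmetric]
  proof (cases "w \<le> K*P")
    case True
    have "w powr (1-g) \<le> (K*P) powr (1-g)" using powr_mono2[of "1-g" w "K*P"] g w True by simp
    also have "\<dots> = K powr (1-g) * P powr (1-g)" using K0 P0 by (simp add: powr_mult)
    finally have h1: "w powr (1-g) \<le> K powr (1-g) * P powr (1-g)" .
    have h2: "P powr g * P powr (1-g) \<le> P"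
    proof (cases "P = 0")
      case False then show ?thesis using P0 by (simp add: powr_add[symmetric])
    qed simp
    have "b \<le> C * P powr g * (K powr (1-g) * P powr (1-g))"
      using bP h1 C by (meson mult_left_mono order_trans powr_ge_zero mult_nonneg_nonneg less_imp_le)
    also have "\<dots> = C * K powr (1-g) * (P powr g * P powr (1-g))" by simp
    also have "\<dots> \<le> C * K powr (1-g) * P" using h2 C by (simp add: mult_left_mono)
    finally have "b \<le> C * K powr (1-g) * P" .
    moreover have "0 \<le> w/(8*Creg)" using w Cr by simp
    ultimately show "b \<le> C * K powr (1-g) * P + w/(8*Creg)" by linarith
  next
    case False
    moreover have "0 \<le> K*P" using K0 P0 by simp
    ultimately have wp: "w > 0" by linarith
    have "P \<le> w / K" using False K0 by (simp add: field_simps)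
    then have "P powr g \<le> (w/K) powr g" using powr_mono2[of g P "w/K"] g P0 by simp
    also have "\<dots> = w powr g / (8*C*Creg)" using wp K0 Kg by (simp add: powr_divide)
    finally have h: "P powr g \<le> w powr g / (8*C*Creg)" .
    have "b \<le> C * (w powr g / (8*C*Creg)) * w powr (1-g)"
      using bP h C by (meson mult_left_mono mult_right_mono order_trans powr_ge_zero less_imp_le)
    also have "\<dots> = (w powr g * w powr (1-g)) / (8*Creg)" using C by (simp add: field_simps)
    also have "\<dots> = w / (8*Creg)" using wp by (simp add: powr_add[symmetric])
    finally show "b \<le> C * K powr (1-g) * P + w/(8*Creg)" using c1P by linarith
  qed
qed

lemma final_alg:
  fixes D F b Q c1 P c2 :: real
  assumes D: "0 \<le> D" and "0 \<le> F" "0 \<le> P" "0 \<le> c1" "0 \<le> c2" "0 \<le> b"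
    and A: "2*D^2 + Q \<le> 2*D*(F+b)"
    and B: "7*b \<le> 8*c1*P + F + D + 8*c2"
  shows "D^2 + Q \<le> 20 * (1 + c1^2 + c2^2) * (P^2 + F^2 + 1)"
proof -
  define G where "G = 8*c1*P + 8*c2"
  have h1: "7*(D*b) \<le> D*(G+F+D)" using mult_left_mono[OF B D] by (simp add: G_def algebra_simps)
  have h2: "16/7*D*F \<le> 4/7*D^2 + 16/7*F^2" using sum_squares_ge_zero[of "D - 2*F" 0]
    by (simp add: power2_eq_square algebra_simps)
  have h3: "2/7*D*G \<le> 1/7*D^2 + 1/7*G^2" using sum_squares_ge_zero[of "D - G" 0]
    by (simp add: power2_eq_square algebra_simps)
  have h4: "G^2 \<le> 128*c1^2*P^2 + 128*c2^2" using sum_squares_ge_zero[of "8*c1*P - 8*c2" 0]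
    by (simp add: G_def power2_eq_square algebra_simps)
  have "D^2 + Q \<le> 16/7*F^2 + 1/7*G^2" using A h1 h2 h3 by (simp add: power2_eq_square algebra_simps)
  also have "\<dots> \<le> 16/7*F^2 + 1/7*(128*c1^2*P^2 + 128*c2^2)" using h4 by simp
  also have "\<dots> \<le> 20 * (1 + c1^2 + c2^2) * (P^2 + F^2 + 1)"
  proof -
    have "0 \<le> F^2 * c1^2" "0 \<le> F^2 * c2^2" "0 \<le> P^2 * c2^2" "0 \<le> P^2 * c1^2" "0 \<le> P^2" "0 \<le> c1^2" "0 \<le> c2^2" "0 \<le> F^2"
      by simp_all
    note nn = this
    show ?thesis apply (simp add: algebra_simps) using nn by linarith
  qed
  finally show ?thesis .
qed


lemma lin_diff: "lin_subspace S \<Longrightarrow> x \<in> S \<Longrightarrow> y \<in> S \<Longrightarrow> x - y \<in> S"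
  unfolding lin_subspace_def by (metis diff_conv_add_uminus scaleR_minus1_left)

lemma hf_lin: "hilbert_form S b \<Longrightarrow> lin_subspace S"
  by (simp add: hilbert_form_def)

lemma hf_diff_left:
  assumes "hilbert_form S b" "x \<in> S" "y \<in> S" "z \<in> S"
  shows "b (x - y) z = b x z - b y z"
proof -
  have L: "lin_subspace S" using assms(1) by (simp add: hilbert_form_def)
  have m: "(-1) *\<^sub>R y \<in> S" using L assms(3) unfolding lin_subspace_def by blast
  have "b (x + (-1) *\<^sub>R y) z = b x z + b ((-1) *\<^sub>R y) z"
    using assms m unfolding hilbert_form_def by blast
  also have "b ((-1) *\<^sub>R y) z = (-1) * b y z" using assms unfolding hilbert_form_def by blast
  finally show ?thesis by simp
qed

lemma hf_sym: "hilbert_form S b \<Longrightarrow> x \<in> S \<Longrightarrow> y \<in> S \<Longrightarrow> b x y = b y x"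
  unfolding hilbert_form_def by blast

lemma hf_nonneg:
  assumes "hilbert_form S b" "x \<in> S" shows "0 \<le> b x x"
proof (cases "x = 0")
  case True
  have "b (0 *\<^sub>R x) x = 0 * b x x" using assms unfolding hilbert_form_def by blast
  then show ?thesis using True by simp
next
  case False then show ?thesis using assms unfolding hilbert_form_def by (meson less_imp_le)
qed

lemma Vnorm_sq: "hilbert_form S b \<Longrightarrow> x \<in> S \<Longrightarrow> (Vnorm b x)^2 = b x x"
  by (simp add: Vnorm_def hf_nonneg)

lemma Vnorm_nonneg: "hilbert_form S b \<Longrightarrow> x \<in> S \<Longrightarrow> 0 \<le> Vnorm b x"
  by (simp add: Vnorm_def hf_nonneg)


lemma core:
  fixes V :: "'h::{real_inner,banach,second_countable_topology} set"
  assumes gs: "gelfand_setting V a" and Wok: "W_ok V a W wi" and pok: "phi_ok V a phi"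
    and h4: "H4 V a B W wi C \<gamma>" and h5: "H5 V a phi W wi Creg Cphi2"
    and u0: "u 0 \<in> Dphi V phi" and uW: "\<forall>n\<in>{1..N}. u n \<in> W \<inter> Dphi V phi"
    and sch: "scheme V a B phi f dt N u" and dt: "dt > 0" and n: "n \<in> {1..N}"
  shows "(norm ((1 / dt) *\<^sub>R (u n - u (n - 1))))\<^sup>2
            + ((Vnorm a (u n))\<^sup>2 - (Vnorm a (u (n - 1)))\<^sup>2 + (Vnorm a (u n - u (n - 1)))\<^sup>2) / dt
            + 2 * (real_of_ereal (phi (u n)) - real_of_ereal (phi (u (n - 1)))) / dt
            \<le> 20 * (1 + (C * ((8*C*Creg) powr (1/\<gamma>)) powr (1-\<gamma>))^2 + (Cphi2/(8*Creg))^2)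
                * (Vnorm a (u (n - 1)) powr (2 * (1 / \<gamma>)) * (Vnorm a (u n))\<^sup>2
                                   + (norm (favg f dt n))\<^sup>2 + 1)"
proof -
  define p where "p = u (n - 1)"
  define v0 where "v0 = u n"
  have hf: "hilbert_form V a" using gs by (simp add: gelfand_setting_def)
  have L: "lin_subspace V" using hf by (rule hf_lin)
  have WV: "W \<subseteq> V" and hfW: "hilbert_form W wi" using Wok by (auto simp: W_ok_def)
  have uD: "v0 \<in> Dphi V phi" and uWW: "v0 \<in> W" using uW n by (auto simp: v0_def)
  have uV: "v0 \<in> V" using uWW WV by blast
  have pD: "p \<in> Dphi V phi"
  proof (cases "n = 1")
    case True then show ?thesis using u0 by (simp add: p_def)
  next
    case False
    then have "n - 1 \<in> {1..N}" using n by auto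
    then show ?thesis using uW by (auto simp: p_def)
  qed
  have pV: "p \<in> V" using pD by (simp add: Dphi_def)
  have ninf: "\<forall>v\<in>V. phi v \<noteq> -\<infinity>" using pok by (simp add: phi_ok_def)
  obtain ru where ru: "phi v0 = ereal ru"
    using uD ninf uV unfolding Dphi_def by (cases "phi v0") auto
  obtain rp where rp: "phi p = ereal rp"
    using pD ninf pV unfolding Dphi_def by (cases "phi p") auto
  have C0: "C > 0" and g0: "0 < \<gamma>" "\<gamma> \<le> 1" and inH: "in_H V (B p v0)"
    and nb: "normH V (B p v0) \<le> C * Vnorm a p * Vnorm a v0 powr \<gamma> * Vnorm wi v0 powr (1 - \<gamma>)"
    using h4 pV uWW unfolding H4_def by auto
  have Cr: "Creg > 0" and Cp: "Cphi2 > 0" using h5 by (auto simp: H5_def)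
  define h where "h = (SOME h. \<forall>v\<in>V. B p v0 v = h \<bullet> v)"
  have hB: "\<forall>v\<in>V. B p v0 v = h \<bullet> v"
    using inH unfolding in_H_def h_def by (rule someI_ex)
  have bnd: "norm h \<le> C * Vnorm a p * Vnorm a v0 powr \<gamma> * Vnorm wi v0 powr (1 - \<gamma>)"
    using nb by (simp add: normH_def h_def)
  define \<delta> where "\<delta> = (1 / dt) *\<^sub>R (v0 - p)"
  define fn where "fn = favg f dt n"
  define g where "g = fn - \<delta> - h"
  have S: "\<And>v. v \<in> V \<Longrightarrow> ereal (\<delta> \<bullet> (v - v0) + a v0 (v - v0) + h \<bullet> (v - v0)) + phi v - phi v0
      \<ge> ereal (fn \<bullet> (v - v0))"
  proof -
    fix v assume v: "v \<in> V"
    have "v - v0 \<in> V" using L v uV by (rule lin_diff)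
    then have Bh: "B p v0 (v - v0) = h \<bullet> (v - v0)" using hB by blast
    have "ereal (fn \<bullet> (v - v0)) \<le> ereal (\<delta> \<bullet> (v - v0) + a v0 (v - v0) + B p v0 (v - v0)) + phi v - phi v0"
      using sch n v unfolding scheme_def \<delta>_def fn_def v0_def p_def by blast
    then show "ereal (\<delta> \<bullet> (v - v0) + a v0 (v - v0) + h \<bullet> (v - v0)) + phi v - phi v0
      \<ge> ereal (fn \<bullet> (v - v0))"
      using Bh by simp
  qed
  have VI: "\<forall>v\<in>V. ereal (a v0 (v - v0)) + phi v - phi v0 \<ge> ereal (g \<bullet> (v - v0))"
  proof
    fix v assume v: "v \<in> V"
    show "ereal (a v0 (v - v0)) + phi v - phi v0 \<ge> ereal (g \<bullet> (v - v0))"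
    proof (cases "phi v")
      case (real rv)
      then have "\<delta> \<bullet> (v - v0) + a v0 (v - v0) + h \<bullet> (v - v0) + rv - ru \<ge> fn \<bullet> (v - v0)"
        using S[OF v] ru by simp
      then have "a v0 (v - v0) + rv - ru \<ge> g \<bullet> (v - v0)"
        by (simp add: g_def inner_diff_left)
      then show ?thesis using real ru by simp
    next
      case PInf then show ?thesis using ru by simp
    next
      case MInf then show ?thesis using ninf v by simp
    qed
  qed
  have wb: "Vnorm wi v0 \<le> Creg * norm g + Cphi2"
    using h5 uD VI unfolding H5_def by blast
  have ng: "norm g \<le> norm fn + norm \<delta> + norm h"
    unfolding g_def by (meson add_right_mono norm_triangle_ineq4 order_trans)
  have Sp: "\<delta> \<bullet> (p - v0) + a v0 (p - v0) + h \<bullet> (p - v0) + rp - ru \<ge> fn \<bullet> (p - v0)"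
    using S[OF pV] rp ru by simp
  have pv: "p - v0 = - (dt *\<^sub>R \<delta>)" using dt by (simp add: \<delta>_def)
  define D where "D = norm \<delta>"
  define F where "F = norm fn"
  define b where "b = norm h"
  have e1: "\<delta> \<bullet> (p - v0) = - dt * D^2" by (simp add: pv D_def power2_norm_eq_inner)
  have e2: "h \<bullet> (p - v0) \<le> dt * (b * D)"
  proof -
    have "h \<bullet> (p - v0) = - dt * (h \<bullet> \<delta>)" by (simp add: pv)
    also have "\<dots> \<le> dt * \<bar>h \<bullet> \<delta>\<bar>" using dt by (simp add: abs_if mult_le_0_iff)
    also have "\<dots> \<le> dt * (b * D)" using dt unfolding b_def D_def
      by (simp add: Cauchy_Schwarz_ineq2 mult_left_mono)
    finally show ?thesis .
  qed
  have e3: "- (fn \<bullet> (p - v0)) \<le> dt * (F * D)"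
  proof -
    have "- (fn \<bullet> (p - v0)) = dt * (fn \<bullet> \<delta>)" by (simp add: pv)
    also have "\<dots> \<le> dt * \<bar>fn \<bullet> \<delta>\<bar>" using dt by (simp add: mult_left_mono)
    also have "\<dots> \<le> dt * (F * D)" using dt unfolding F_def D_def
      by (simp add: Cauchy_Schwarz_ineq2 mult_left_mono)
    finally show ?thesis .
  qed
  have dV: "v0 - p \<in> V" and dV2: "p - v0 \<in> V" using L uV pV by (auto intro: lin_diff)
  define Y where "Y = a v0 v0 - a p p + a (v0 - p) (v0 - p)"
  have e4: "a v0 (p - v0) = - Y / 2"
  proof -
    have A1: "a v0 (p - v0) = a p v0 - a v0 v0"
      using hf_sym[OF hf uV dV2] hf_diff_left[OF hf pV uV uV] by simp
    have A2: "a (v0 - p) (v0 - p) = a v0 (v0 - p) - a p (v0 - p)" by (rule hf_diff_left[OF hf uV pV dV])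
    have A3: "a v0 (v0 - p) = a v0 v0 - a p v0"
      using hf_sym[OF hf uV dV] hf_diff_left[OF hf uV pV uV] by simp
    have A4: "a p (v0 - p) = a v0 p - a p p"
      using hf_sym[OF hf pV dV] hf_diff_left[OF hf uV pV pV] by simp
    have A5: "a v0 p = a p v0" by (rule hf_sym[OF hf uV pV])
    show ?thesis unfolding Y_def using A1 A2 A3 A4 A5 by simp
  qed
  have main1: "dt * D^2 + Y/2 + ru - rp \<le> dt * (D * (F + b))"
    using Sp e1 e2 e3 e4 by (simp add: algebra_simps)
  define Q where "Q = Y / dt + 2 * (ru - rp) / dt"
  have main2: "2 * D^2 + Q \<le> 2 * D * (F + b)"
  proof -
    have "dt * (2 * D^2 + Q) = 2 * (dt * D^2 + Y/2 + ru - rp)" using dt by (simp add: Q_def field_simps)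
    also have "\<dots> \<le> dt * (2 * D * (F + b))" using main1 by simp
    finally show ?thesis using dt by simp
  qed
  define x where "x = Vnorm a p"
  define y where "y = Vnorm a v0"
  define w where "w = Vnorm wi v0"
  have x0: "0 \<le> x" using Vnorm_nonneg[OF hf pV] by (simp add: x_def)
  have y0: "0 \<le> y" using Vnorm_nonneg[OF hf uV] by (simp add: y_def)
  have w0: "0 \<le> w" using Vnorm_nonneg[OF hfW uWW] by (simp add: w_def)
  define c1 where "c1 = C * ((8*C*Creg) powr (1/\<gamma>)) powr (1-\<gamma>)"
  define c2 where "c2 = Cphi2/(8*Creg)"
  define P where "P = x powr (1/\<gamma>) * y"
  have bb: "b \<le> c1 * P + w / (8*Creg)"
    using bound_b[OF C0 g0 Cr x0 y0 w0] bnd unfolding c1_def P_def b_def x_def y_def w_def by blast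
  have "Creg * norm g \<le> Creg * (F + D + b)"
    using ng Cr unfolding F_def D_def b_def by (simp add: mult_left_mono)
  then have "w \<le> Creg * (F + D + b) + Cphi2"
    using wb unfolding w_def by linarith
  then have "w / (8*Creg) \<le> (F + D + b)/8 + c2" using Cr by (simp add: c2_def field_simps)
  then have "b \<le> c1 * P + ((F + D + b) / 8 + c2)" using bb by (meson add_left_mono order_trans)
  then have "7*b \<le> 8*(c1*P) + F + D + 8*c2" by (simp add: field_simps)
  then have b7: "7*b \<le> 8*c1*P + F + D + 8*c2" by (simp add: mult.assoc)
  have fin: "D^2 + Q \<le> 20 * (1 + c1^2 + c2^2) * (P^2 + F^2 + 1)"
    by (rule final_alg[OF _ _ _ _ _ _ main2 b7])
       (use x0 y0 C0 Cp Cr in \<open>auto simp: D_def F_def P_def c1_def c2_def b_def\<close>)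
  have P2: "P^2 = x powr (2 * (1/\<gamma>)) * y^2"
    by (simp add: P_def power_mult_distrib power2_eq_square powr_add[symmetric])
  have Yeq: "Y = (Vnorm a v0)^2 - (Vnorm a p)^2 + (Vnorm a (v0 - p))^2"
    by (simp add: Y_def Vnorm_sq[OF hf uV] Vnorm_sq[OF hf pV] Vnorm_sq[OF hf dV])
  have rru: "real_of_ereal (phi (u n)) = ru" using ru by (simp add: v0_def)
  have rrp: "real_of_ereal (phi (u (n - 1))) = rp" using rp by (simp add: p_def)
  show ?thesis
    using fin unfolding P2 Q_def Yeq rru rrp
    by (simp add: D_def \<delta>_def F_def fn_def v0_def p_def x_def y_def c1_def c2_def ru rp add_divide_distrib)
qed

theorem mainTheorem5:
  shows "\<exists>M :: real \<Rightarrow> real \<Rightarrow> real \<Rightarrow> real \<Rightarrow> real.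
   \<forall>C \<gamma> Creg Cphi2.
    (C > 0 \<and> 0 < \<gamma> \<and> \<gamma> \<le> 1 \<and> Creg > 0 \<and> Cphi2 > 0 \<longrightarrow> M C \<gamma> Creg Cphi2 > 0) \<and>
    (\<forall>(V :: 'h::{real_inner,banach,second_countable_topology} set) a B CB phi W wi.
      gelfand_setting V a \<and> B_ok V a B CB \<and> phi_ok V a phi \<and> W_ok V a W wi
      \<and> H4 V a B W wi C \<gamma> \<and> H5 V a phi W wi Creg Cphi2 \<longrightarrow>
      (\<forall>T u0 f dt N u.
         T > 0 \<and> u0 \<in> Dphi V phi \<and> L2H T f \<and> dt > 0 \<and> real N * dt \<le> T
         \<and> u 0 = u0 \<and> (\<forall>n\<in>{1..N}. u n \<in> W \<inter> Dphi V phi)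
         \<and> scheme V a B phi f dt N u \<longrightarrow>
         (\<forall>n\<in>{1..N}.
            (norm ((1 / dt) *\<^sub>R (u n - u (n - 1))))\<^sup>2
            + ((Vnorm a (u n))\<^sup>2 - (Vnorm a (u (n - 1)))\<^sup>2 + (Vnorm a (u n - u (n - 1)))\<^sup>2) / dt
            + 2 * (real_of_ereal (phi (u n)) - real_of_ereal (phi (u (n - 1)))) / dt
            \<le> M C \<gamma> Creg Cphi2 * (Vnorm a (u (n - 1)) powr (2 * (1 / \<gamma>)) * (Vnorm a (u n))\<^sup>2
                                   + (norm (favg f dt n))\<^sup>2 + 1))))"
proof (rule exI[of _ "\<lambda>C \<gamma> Creg Cphi2. 20 * (1 + (C * ((8*C*Creg) powr (1/\<gamma>)) powr (1-\<gamma>))^2 + (Cphi2/(8*Creg))^2)"],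
       intro allI conjI impI ballI)
  fix C \<gamma> Creg Cphi2 :: real
  show "0 < 20 * (1 + (C * ((8*C*Creg) powr (1/\<gamma>)) powr (1-\<gamma>))^2 + (Cphi2/(8*Creg))^2)"
    by (simp add: add_pos_nonneg)
next
  fix C \<gamma> Creg Cphi2 :: real and V :: "'h::{real_inner,banach,second_countable_topology} set"
    and a B CB phi W wi T u0 f dt N u n
  assume A: "gelfand_setting V a \<and> B_ok V a B CB \<and> phi_ok V a phi \<and> W_ok V a W wi
      \<and> H4 V a B W wi C \<gamma> \<and> H5 V a phi W wi Creg Cphi2"
    and B: "T > 0 \<and> u0 \<in> Dphi V phi \<and> L2H T f \<and> dt > 0 \<and> real N * dt \<le> T
         \<and> u 0 = u0 \<and> (\<forall>n\<in>{1..N}. u n \<in> W \<inter> Dphi V phi)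
         \<and> scheme V a B phi f dt N u" and n: "n \<in> {1..N}"
  show "(norm ((1 / dt) *\<^sub>R (u n - u (n - 1))))\<^sup>2
            + ((Vnorm a (u n))\<^sup>2 - (Vnorm a (u (n - 1)))\<^sup>2 + (Vnorm a (u n - u (n - 1)))\<^sup>2) / dt
            + 2 * (real_of_ereal (phi (u n)) - real_of_ereal (phi (u (n - 1)))) / dt
            \<le> 20 * (1 + (C * ((8*C*Creg) powr (1/\<gamma>)) powr (1-\<gamma>))^2 + (Cphi2/(8*Creg))^2)
               * (Vnorm a (u (n - 1)) powr (2 * (1 / \<gamma>)) * (Vnorm a (u n))\<^sup>2
                                   + (norm (favg f dt n))\<^sup>2 + 1)"
    using A B n by (intro core[where W=W and wi=wi and B=B and N=N]) auto
qed

end
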